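(* Let $\mathcal X=\mathcal X_1\times\cdots\times\mathcal X_b$, $\mathcal X_i=\mathbb R^{m_i\times n_i}$ with trace inner product and arbitrary norms $\|\cdot\|_{(i)}$ (dual norms $\|\cdot\|_{(i)\star}$). Let $f:\mathcal X\to\mathbb R$ be continuously differentiable with $f\ge f^\star$. Let $\mathcal D$ be a probability distribution on subsets of $[b]$ and assume there are constants $L^0_{i,S},L^1_{i,S}\ge0$ ($S\in\operatorname{supp}(\mathcal D)$) such that for every $S\in\operatorname{supp}(\mathcal D)$, $X\in\mathcal X$ and $\Gamma$ with $\Gamma_i=0$ for $i\notin S$, $$f(X+\Gamma)-f(X)-\langle\nabla f(X),\Gamma\rangle\le\sum_{i\in S}\frac{L^0_{i,S}+L^1_{i,S}\|\nabla_if(X)\|_{(i)\star}}2\|\Gamma_i\|_{(i)}^2.$$ Fix $\varepsilon>0$. From $X^0$, for $k=0,1,\dots$ draw $S^k\sim\mathcal D$ i.i.d., set $X_i^{k+1}=X_i^k-\gamma_i^k(\nabla_if(X^k))^\sharp$ for $i\in S^k$ and $X_i^{k+1}=X_i^k$ otherwise, with $\gamma_i^k=(L^0_{i,S^k}+L^1_{i,S^k}\|\nabla_if(X^k)\|_{(i)\star})^{-1}$. Let $\hat S\sim\mathcal D$, $\delta^0=f(X^0)-f^\star$ and $w_i=\dfrac{\Pr(i\in\hat S)}{\mathbb E[L^1_{i,\hat S}\mid i\in\hat S]}$. Then to guarantee $$\min_{k=0,\dots,K-1}\sum_{i=1}^b\frac{w_i}{\frac1b\sum_{l=1}^bw_l}\mathbb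 E\big[\|\nabla_if(X^k)\|_{(i)\star}\big]\le\varepsilon,$$ it suffices to run the method for $$K=\left\lceil\frac{2\delta^0\sum_{i=1}^b\frac{\Pr(i\in\hat S)\,\mathbb E[L^0_{i,\hat S}\mid i\in\hat S]}{\left(\mathbb E[L^1_{i,\hat S}\mid i\in\hat S]\right)^2}}{\varepsilon^2\left(\frac1b\sum_{l=1}^bw_l\right)^2}+\frac{2\delta^0}{\varepsilon\left(\frac1b\sum_{l=1}^bw_l\right)}\right\rceil$$ iterations.
   Context: $\operatorname{supp}(\mathcal D)$ is the collection of subsets of $[b]$ with positive probability. For $G\in\mathcal X_i$, $G^\sharp$ is an element of $\arg\max_Z\{\langle G,Z\rangle-\frac12\|Z\|_{(i)}^2\}$. Expectations are over the random sets $S^k$. *)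

theory Defs
  imports "HOL-Probability.Probability"
begin

text \<open>Matrices in R^(m x n) are represented as functions nat => nat => real vanishing
outside the index range r < m, c < n.\<close>

definition Mat :: "nat \<Rightarrow> nat \<Rightarrow> (nat \<Rightarrow> nat \<Rightarrow> real) set" where
  "Mat m n = {A. \<forall>r c. (m \<le> r \<or> n \<le> c) \<longrightarrow> A r c = 0}"

definition frob :: "nat \<Rightarrow> nat \<Rightarrow> (nat \<Rightarrow> nat \<Rightarrow> real) \<Rightarrow> (nat \<Rightarrow> nat \<Rightarrow> real) \<Rightarrow> real" where
  "frob m n A B = (\<Sum>r<m. \<Sum>c<n. A r c * B r c)"

definition is_mat_norm :: "((nat \<Rightarrow> nat \<Rightarrow> real) \<Rightarrow> real) \<Rightarrow> nat \<Rightarrow> nat \<Rightarrow> bool" where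
  "is_mat_norm N m n \<longleftrightarrow>
     (\<forall>A\<in>Mat m n. 0 \<le> N A) \<and>
     (\<forall>A\<in>Mat m n. N A = 0 \<longleftrightarrow> (\<forall>r c. A r c = 0)) \<and>
     (\<forall>A\<in>Mat m n. \<forall>B\<in>Mat m n. N (\<lambda>r c. A r c + B r c) \<le> N A + N B) \<and>
     (\<forall>A\<in>Mat m n. \<forall>t::real. N (\<lambda>r c. t * A r c) = \<bar>t\<bar> * N A)"

definition dual_norm :: "((nat \<Rightarrow> nat \<Rightarrow> real) \<Rightarrow> real) \<Rightarrow> nat \<Rightarrow> nat \<Rightarrow> (nat \<Rightarrow> nat \<Rightarrow> real) \<Rightarrow> real" where
  "dual_norm N m n G = Sup {frob m n G Z | Z. Z \<in> Mat m n \<and> N Z \<le> 1}"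

definition is_sharp :: "((nat \<Rightarrow> nat \<Rightarrow> real) \<Rightarrow> real) \<Rightarrow> nat \<Rightarrow> nat
    \<Rightarrow> ((nat \<Rightarrow> nat \<Rightarrow> real) \<Rightarrow> (nat \<Rightarrow> nat \<Rightarrow> real)) \<Rightarrow> bool" where
  "is_sharp N m n s \<longleftrightarrow>
     (\<forall>G\<in>Mat m n. s G \<in> Mat m n \<and>
        (\<forall>Z\<in>Mat m n. frob m n G Z - (N Z)\<^sup>2 / 2 \<le> frob m n G (s G) - (N (s G))\<^sup>2 / 2))"

text \<open>The product space X_1 x ... x X_b (blocks indexed 0..b-1) is represented as real^'k,
where e :: 'k => nat x nat x nat is a bijection onto {(i,r,c). i<b, r<m i, c<n i}:
coordinate k is entry (r,c) of block i. The standard inner product on real^'k is then the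
sum of the blockwise trace inner products. blk extracts block i as a matrix.\<close>
definition blk :: "('k \<Rightarrow> nat \<times> nat \<times> nat) \<Rightarrow> (nat \<Rightarrow> nat) \<Rightarrow> (nat \<Rightarrow> nat)
    \<Rightarrow> real^'k \<Rightarrow> nat \<Rightarrow> (nat \<Rightarrow> nat \<Rightarrow> real)" where
  "blk e m n X i = (\<lambda>r c. if r < m i \<and> c < n i then X $ (inv e (i, r, c)) else 0)"

definition bcd_step :: "('k \<Rightarrow> nat \<times> nat \<times> nat) \<Rightarrow> (nat \<Rightarrow> nat) \<Rightarrow> (nat \<Rightarrow> nat)
    \<Rightarrow> (nat \<Rightarrow> (nat \<Rightarrow> nat \<Rightarrow> real) \<Rightarrow> real)
    \<Rightarrow> (nat \<Rightarrow> (nat \<Rightarrow> nat \<Rightarrow> real) \<Rightarrow> (nat \<Rightarrow> nat \<Rightarrow> real))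
    \<Rightarrow> (real^'k \<Rightarrow> real^'k) \<Rightarrow> (nat \<Rightarrow> nat set \<Rightarrow> real) \<Rightarrow> (nat \<Rightarrow> nat set \<Rightarrow> real)
    \<Rightarrow> nat set \<Rightarrow> real^'k \<Rightarrow> real^'k" where
  "bcd_step e m n nrm sharp grad L0 L1 S X =
     (\<chi> k. (case e k of (i, r, c) \<Rightarrow>
        if i \<in> S then
          X $ k - inverse (L0 i S + L1 i S * dual_norm (nrm i) (m i) (n i) (blk e m n (grad X) i))
                  * sharp i (blk e m n (grad X) i) r c
        else X $ k))"

primrec bcd_iter :: "('k \<Rightarrow> nat \<times> nat \<times> nat) \<Rightarrow> (nat \<Rightarrow> nat) \<Rightarrow> (nat \<Rightarrow> nat)
    \<Rightarrow> (nat \<Rightarrow> (nat \<Rightarrow> nat \<Rightarrow> real) \<Rightarrow> real)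
    \<Rightarrow> (nat \<Rightarrow> (nat \<Rightarrow> nat \<Rightarrow> real) \<Rightarrow> (nat \<Rightarrow> nat \<Rightarrow> real))
    \<Rightarrow> (real^'k \<Rightarrow> real^'k) \<Rightarrow> (nat \<Rightarrow> nat set \<Rightarrow> real) \<Rightarrow> (nat \<Rightarrow> nat set \<Rightarrow> real)
    \<Rightarrow> real^'k \<Rightarrow> nat set stream \<Rightarrow> nat \<Rightarrow> real^'k" where
  "bcd_iter e m n nrm sharp grad L0 L1 X0 \<omega> 0 = X0"
| "bcd_iter e m n nrm sharp grad L0 L1 X0 \<omega> (Suc k) =
     bcd_step e m n nrm sharp grad L0 L1 (\<omega> !! k) (bcd_iter e m n nrm sharp grad L0 L1 X0 \<omega> k)"

definition pin :: "nat set pmf \<Rightarrow> nat \<Rightarrow> real" where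
  "pin D i = measure_pmf.prob D {S. i \<in> S}"

definition cexp :: "nat set pmf \<Rightarrow> (nat set \<Rightarrow> real) \<Rightarrow> nat \<Rightarrow> real" where
  "cexp D g i = measure_pmf.expectation (cond_pmf D {S. i \<in> S}) g"

end

theory Submission
  imports Defs
begin
primrec giter :: "('s \<Rightarrow> 'a \<Rightarrow> 'a) \<Rightarrow> 'a \<Rightarrow> 's stream \<Rightarrow> nat \<Rightarrow> 'a" where
  "giter stp X \<omega> 0 = X"
| "giter stp X \<omega> (Suc k) = stp (\<omega> !! k) (giter stp X \<omega> k)"

primrec Ev :: "'s pmf \<Rightarrow> ('s \<Rightarrow> 'a \<Rightarrow> 'a) \<Rightarrow> nat \<Rightarrow> ('a \<Rightarrow> real) \<Rightarrow> 'a \<Rightarrow> real" where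
  "Ev D stp 0 h X = h X"
| "Ev D stp (Suc k) h X = (\<Sum>S\<in>set_pmf D. pmf D S * Ev D stp k h (stp S X))"

lemma giter_Cons: "giter stp X (x ## xs) (Suc k) = giter stp (stp x X) xs k"
  by (induction k) auto

lemma Ev_nonneg: "(\<And>X. 0 \<le> h X) \<Longrightarrow> 0 \<le> Ev D stp k h X"
  by (induction k arbitrary: X) (auto intro!: sum_nonneg mult_nonneg_nonneg)

lemma Ev_mono: "(\<And>X. h X \<le> h' X) \<Longrightarrow> Ev D stp k h X \<le> Ev D stp k h' X"
  by (induction k arbitrary: X) (auto intro!: sum_mono mult_left_mono)

lemma Ev_lin: "Ev D stp k (\<lambda>X. a * h X + c * h' X) X = a * Ev D stp k h X + c * Ev D stp k h' X"
  by (induction k arbitrary: X) (auto simp: sum.distrib sum_distrib_left algebra_simps)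

lemma Ev_sum: "finite I \<Longrightarrow> Ev D stp k (\<lambda>X. \<Sum>i\<in>I. h i X) X = (\<Sum>i\<in>I. Ev D stp k (h i) X)"
  by (induction k arbitrary: X) (auto simp: sum_distrib_left intro: sum.swap)

lemma Ev_const: "finite (set_pmf D) \<Longrightarrow> Ev D stp k (\<lambda>X. c) X = c"
proof (induction k arbitrary: X)
  case (Suc k)
  then show ?case by (simp add: sum_distrib_right[symmetric] sum_pmf_eq_1)
qed simp

lemma Ev_descent:
  assumes fin: "finite (set_pmf D)"
    and dec: "\<And>S X. S \<in> set_pmf D \<Longrightarrow> F (stp S X) \<le> F X - \<phi> S X"
    and low: "\<And>X. fstar \<le> F X"
  shows "(\<Sum>j<K. Ev D stp j (\<lambda>X. \<Sum>S\<in>set_pmf D. pmf D S * \<phi> S X) X0) \<le> F X0 - fstar"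
proof (induction K arbitrary: X0)
  case 0
  then show ?case using low by simp
next
  case (Suc K)
  define \<psi> where "\<psi> = (\<lambda>X. \<Sum>S\<in>set_pmf D. pmf D S * \<phi> S X)"
  have "(\<Sum>j<Suc K. Ev D stp j \<psi> X0) = \<psi> X0 + (\<Sum>j<K. Ev D stp (Suc j) \<psi> X0)"
    unfolding sum.lessThan_Suc_shift by (simp only: Ev.simps(1))
  also have "(\<Sum>j<K. Ev D stp (Suc j) \<psi> X0) = (\<Sum>S\<in>set_pmf D. pmf D S * (\<Sum>j<K. Ev D stp j \<psi> (stp S X0)))"
    by (simp add: sum_distrib_left) (rule sum.swap)
  also have "\<dots> \<le> (\<Sum>S\<in>set_pmf D. pmf D S * (F X0 - \<phi> S X0 - fstar))"
  proof (rule sum_mono, rule mult_left_mono)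
    fix S assume S: "S \<in> set_pmf D"
    show "(\<Sum>j<K. Ev D stp j \<psi> (stp S X0)) \<le> F X0 - \<phi> S X0 - fstar"
      using Suc[of "stp S X0"] dec[OF S, of X0] unfolding \<psi>_def by linarith
  qed simp
  also have "\<dots> = (F X0 - fstar) * (\<Sum>S\<in>set_pmf D. pmf D S) - \<psi> X0"
    unfolding \<psi>_def by (simp add: algebra_simps sum_distrib_left sum_subtractf sum.distrib)
  also have "\<dots> = F X0 - fstar - \<psi> X0" using fin by (simp add: sum_pmf_eq_1)
  finally show ?case unfolding \<psi>_def by simp
qed

lemma Ev_stream_nn:
  assumes fin: "finite (set_pmf D)" and nn: "\<And>X. 0 \<le> g X"
    and meas: "(\<lambda>\<omega>. ennreal (g (giter stp X0 \<omega> k))) \<in> borel_measurable (stream_space (measure_pmf D))"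
  shows "(\<integral>\<^sup>+\<omega>. ennreal (g (giter stp X0 \<omega> k)) \<partial>stream_space (measure_pmf D)) = ennreal (Ev D stp k g X0)"
  using meas
proof (induction k arbitrary: X0)
  case 0
  interpret S: prob_space "stream_space (measure_pmf D)"
    by (rule prob_space.prob_space_stream_space) (rule prob_space_measure_pmf)
  show ?case by (simp add: S.emeasure_space_1)
next
  case (Suc k)
  have "(\<integral>\<^sup>+\<omega>. ennreal (g (giter stp X0 \<omega> (Suc k))) \<partial>stream_space (measure_pmf D))
     = (\<integral>\<^sup>+x. (\<integral>\<^sup>+xs. ennreal (g (giter stp X0 (x ## xs) (Suc k))) \<partial>stream_space (measure_pmf D)) \<partial>measure_pmf D)"
    by (rule prob_space.nn_integral_stream_space[OF prob_space_measure_pmf Suc.prems])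
  also have "\<dots> = (\<integral>\<^sup>+x. ennreal (Ev D stp k g (stp x X0)) \<partial>measure_pmf D)"
  proof (rule nn_integral_cong)
    fix x
    have m: "(\<lambda>xs. ennreal (g (giter stp X0 (x ## xs) (Suc k)))) \<in> borel_measurable (stream_space (measure_pmf D))"
      using measurable_compose[OF measurable_Stream[OF measurable_const measurable_ident_sets] Suc.prems, of x]
      by (simp add: comp_def)
    show "(\<integral>\<^sup>+xs. ennreal (g (giter stp X0 (x ## xs) (Suc k))) \<partial>stream_space (measure_pmf D)) = ennreal (Ev D stp k g (stp x X0))"
      unfolding giter_Cons by (rule Suc.IH) (rule m[unfolded giter_Cons])
  qed
  also have "\<dots> = (\<Sum>x\<in>set_pmf D. ennreal (Ev D stp k g (stp x X0)) * pmf D x)"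
    by (rule nn_integral_measure_pmf_finite[OF fin]) simp
  also have "\<dots> = ennreal (Ev D stp (Suc k) g X0)"
    by (simp add: ennreal_mult[symmetric] Ev_nonneg nn sum_ennreal mult.commute)
  finally show ?case .
qed

lemma Ev_stream:
  assumes fin: "finite (set_pmf D)" and nn: "\<And>X. 0 \<le> g X"
  shows "(\<integral>\<omega>. g (giter stp X0 \<omega> k) \<partial>stream_space (measure_pmf D)) \<le> Ev D stp k g X0"
proof (cases "(\<lambda>\<omega>. g (giter stp X0 \<omega> k)) \<in> borel_measurable (stream_space (measure_pmf D))")
  case True
  then have m: "(\<lambda>\<omega>. ennreal (g (giter stp X0 \<omega> k))) \<in> borel_measurable (stream_space (measure_pmf D))"
    by measurable
  show ?thesis
    using integral_eq_nn_integral[OF True] Ev_stream_nn[OF fin nn m] nn Ev_nonneg[of g D stp k X0]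
    by simp
next
  case False
  then have "\<not> integrable (stream_space (measure_pmf D)) (\<lambda>\<omega>. g (giter stp X0 \<omega> k))" by auto
  then show ?thesis using not_integrable_integral_eq Ev_nonneg nn by (metis)
qed

lemma pin_sum:
  assumes fin: "finite (set_pmf D)"
  shows "pin D i = (\<Sum>S\<in>set_pmf D. pmf D S * (if i \<in> S then 1 else 0))"
proof -
  have "pin D i = measure (measure_pmf D) ({S. i \<in> S} \<inter> set_pmf D)"
    unfolding pin_def by (simp add: measure_Int_set_pmf)
  also have "\<dots> = sum (pmf D) ({S. i \<in> S} \<inter> set_pmf D)"
    using fin by (simp add: measure_measure_pmf_finite)
  also have "\<dots> = (\<Sum>S\<in>set_pmf D. pmf D S * (if i \<in> S then 1 else 0))"
    using fin by (auto simp add: Int_commute[of "{S. i \<in> S}"] sum.inter_restrict intro!: sum.cong)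
  finally show ?thesis .
qed

lemma cexp_sum:
  assumes fin: "finite (set_pmf D)" and pos: "0 < pin D i"
  shows "pin D i * cexp D g i = (\<Sum>S\<in>set_pmf D. pmf D S * (if i \<in> S then g S else 0))"
proof -
  have ne: "set_pmf D \<inter> {S. i \<in> S} \<noteq> {}"
  proof
    assume "set_pmf D \<inter> {S. i \<in> S} = {}"
    then have "pin D i = 0" unfolding pin_def
      by (metis Int_commute measure_Int_set_pmf measure_empty)
    with pos show False by simp
  qed
  have "cexp D g i = (\<Sum>S\<in>set_pmf D \<inter> {S. i \<in> S}. g S * pmf (cond_pmf D {S. i \<in> S}) S)"
    unfolding cexp_def
    by (rule integral_measure_pmf_real) (use fin ne in \<open>auto simp: set_cond_pmf\<close>)
  also have "\<dots> = (\<Sum>S\<in>set_pmf D \<inter> {S. i \<in> S}. g S * pmf D S) / pin D i"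
    by (simp add: pmf_cond[OF ne] sum_divide_distrib pin_def)
  finally have "pin D i * cexp D g i = (\<Sum>S\<in>set_pmf D \<inter> {S. i \<in> S}. g S * pmf D S)"
    using pos by simp
  also have "\<dots> = (\<Sum>S\<in>set_pmf D. pmf D S * (if i \<in> S then g S else 0))"
    using fin by (auto simp add: sum.inter_restrict mult.commute intro!: sum.cong)
  finally show ?thesis .
qed

lemma frob_scale: "frob m n G (\<lambda>r c. t * Z r c) = t * frob m n G Z"
  unfolding frob_def by (simp add: sum_distrib_left algebra_simps)

lemma frob_zero: "frob m n G (\<lambda>r c. 0) = 0"
  unfolding frob_def by simp

lemma norm_zero:
  assumes "is_mat_norm N m n" shows "N (\<lambda>r c. 0) = 0"
proof -
  have "(\<lambda>r c. 0::real) \<in> Mat m n" by (simp add: Mat_def)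
  then show ?thesis using assms unfolding is_mat_norm_def by blast
qed

lemma sharp_facts:
  assumes N: "is_mat_norm N m n" and sh: "is_sharp N m n s" and G: "G \<in> Mat m n"
  shows "0 \<le> dual_norm N m n G"
    and "(dual_norm N m n G)\<^sup>2 \<le> 2 * (frob m n G (s G) - (N (s G))\<^sup>2 / 2)"
    and "s G \<in> Mat m n"
proof -
  define M where "M = frob m n G (s G) - (N (s G))\<^sup>2 / 2"
  have sG: "s G \<in> Mat m n" and mx: "\<And>Z. Z \<in> Mat m n \<Longrightarrow> frob m n G Z - (N Z)\<^sup>2 / 2 \<le> M"
    using sh G unfolding is_sharp_def M_def by auto
  have z: "(\<lambda>r c. 0::real) \<in> Mat m n" by (simp add: Mat_def)
  have M0: "0 \<le> M" using mx[OF z] norm_zero[OF N] frob_zero[of m n G] by simp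
  define A where "A = {frob m n G Z | Z. Z \<in> Mat m n \<and> N Z \<le> 1}"
  have bnd: "a \<le> sqrt (2 * M)" if "a \<in> A" for a
  proof -
    obtain Z where Z: "Z \<in> Mat m n" "N Z \<le> 1" "a = frob m n G Z" using \<open>a \<in> A\<close> unfolding A_def by auto
    have tZ: "(\<lambda>r c. a * Z r c) \<in> Mat m n" using Z(1) by (simp add: Mat_def)
    have "frob m n G (\<lambda>r c. a * Z r c) - (N (\<lambda>r c. a * Z r c))\<^sup>2 / 2 \<le> M" by (rule mx[OF tZ])
    moreover have "N (\<lambda>r c. a * Z r c) = \<bar>a\<bar> * N Z" using N Z(1) unfolding is_mat_norm_def by blast
    moreover have "0 \<le> N Z" using N Z(1) unfolding is_mat_norm_def by blast
    ultimately have "a * a - (\<bar>a\<bar> * N Z)\<^sup>2 / 2 \<le> M" by (simp add: frob_scale Z(3))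
    moreover have "(\<bar>a\<bar> * N Z)\<^sup>2 \<le> a\<^sup>2"
    proof -
      have "(\<bar>a\<bar> * N Z)\<^sup>2 = a\<^sup>2 * (N Z)\<^sup>2" by (simp add: power_mult_distrib)
      also have "\<dots> \<le> a\<^sup>2 * 1" using \<open>0 \<le> N Z\<close> Z(2) by (intro mult_left_mono) (auto simp: power_le_one)
      finally show ?thesis by simp
    qed
    ultimately have "a\<^sup>2 \<le> 2 * M" by (simp add: power2_eq_square)
    then show ?thesis by (rule real_le_rsqrt)
  qed
  have "0 \<in> A" unfolding A_def using z norm_zero[OF N] frob_zero[of m n G] by force
  have bdd: "bdd_above A" using bnd by (auto simp: bdd_above_def)
  have d0: "0 \<le> Sup A" by (rule cSup_upper[OF \<open>0 \<in> A\<close> bdd])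
  have d1: "Sup A \<le> sqrt (2 * M)" using \<open>0 \<in> A\<close> bnd by (intro cSup_least) auto
  show "0 \<le> dual_norm N m n G" using d0 unfolding dual_norm_def A_def .
  have "(Sup A)\<^sup>2 \<le> (sqrt (2 * M))\<^sup>2" using d0 d1 by (intro power_mono) auto
  also have "\<dots> = 2 * M" using M0 by simp
  finally show "(dual_norm N m n G)\<^sup>2 \<le> 2 * (frob m n G (s G) - (N (s G))\<^sup>2 / 2)"
    unfolding dual_norm_def A_def M_def .
  show "s G \<in> Mat m n" by (rule sG)
qed

locale bcd =
  fixes b :: nat and m n :: "nat \<Rightarrow> nat"
    and e :: "'k::finite \<Rightarrow> nat \<times> nat \<times> nat"
    and nrm :: "nat \<Rightarrow> (nat \<Rightarrow> nat \<Rightarrow> real) \<Rightarrow> real"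
    and sharp :: "nat \<Rightarrow> (nat \<Rightarrow> nat \<Rightarrow> real) \<Rightarrow> (nat \<Rightarrow> nat \<Rightarrow> real)"
    and f :: "real^'k \<Rightarrow> real" and grad :: "real^'k \<Rightarrow> real^'k" and fstar :: real
    and D :: "nat set pmf" and L0 L1 :: "nat \<Rightarrow> nat set \<Rightarrow> real"
  assumes e_bij: "bij_betw e UNIV {(i, r, c). i < b \<and> r < m i \<and> c < n i}"
    and norms: "\<forall>i<b. is_mat_norm (nrm i) (m i) (n i)"
    and sharps: "\<forall>i<b. is_sharp (nrm i) (m i) (n i) (sharp i)"
    and lower: "\<forall>X. fstar \<le> f X"
    and D_sets: "set_pmf D \<subseteq> Pow {..<b}"
    and L_nonneg: "\<forall>S\<in>set_pmf D. \<forall>i<b. 0 \<le> L0 i S \<and> 0 \<le> L1 i S"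
    and smooth: "\<forall>S\<in>set_pmf D. \<forall>X \<Gamma>. (\<forall>k. fst (e k) \<notin> S \<longrightarrow> \<Gamma> $ k = 0) \<longrightarrow>
        f (X + \<Gamma>) - f X - grad X \<bullet> \<Gamma>
          \<le> (\<Sum>i\<in>S. (L0 i S + L1 i S * dual_norm (nrm i) (m i) (n i) (blk e m n (grad X) i)) / 2
                     * (nrm i (blk e m n \<Gamma> i))\<^sup>2)"
begin

abbreviation "T \<equiv> {(i, r, c). i < b \<and> r < m i \<and> c < n i}"
abbreviation "GG X i \<equiv> blk e m n (grad X) i"
abbreviation "dd X i \<equiv> dual_norm (nrm i) (m i) (n i) (blk e m n (grad X) i)"
abbreviation "cc S X i \<equiv> L0 i S + L1 i S * dual_norm (nrm i) (m i) (n i) (blk e m n (grad X) i)"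
abbreviation "stp \<equiv> bcd_step e m n nrm sharp grad L0 L1"
abbreviation "phi S X \<equiv> (\<Sum>i\<in>S. inverse (cc S X i) * (dd X i)\<^sup>2 / 2)"

definition mkvec :: "(nat \<Rightarrow> nat \<Rightarrow> nat \<Rightarrow> real) \<Rightarrow> real^'k" where
  "mkvec B = (\<chi> k. case e k of (i, r, c) \<Rightarrow> B i r c)"

lemma fin_D: "finite (set_pmf D)"
  by (rule finite_subset[OF D_sets]) simp

lemma e_inv: "t \<in> T \<Longrightarrow> e (inv e t) = t"
  using e_bij by (rule bij_betw_inv_into_right)

lemma e_in: "e k \<in> T"
  by (rule bij_betw_apply[OF e_bij UNIV_I])

lemma blk_mkvec:
  assumes "i < b" "B i \<in> Mat (m i) (n i)"
  shows "blk e m n (mkvec B) i = B i"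
proof (intro ext)
  fix r c
  show "blk e m n (mkvec B) i r c = B i r c"
  proof (cases "r < m i \<and> c < n i")
    case True
    then have "e (inv e (i, r, c)) = (i, r, c)" using assms by (intro e_inv) auto
    then show ?thesis using True by (simp add: blk_def mkvec_def)
  next
    case False
    then show ?thesis using assms(2) by (auto simp: blk_def Mat_def)
  qed
qed

lemma dd_nonneg: "i < b \<Longrightarrow> 0 \<le> dd X i"
  using sharp_facts(1)[of "nrm i" "m i" "n i" "sharp i" "GG X i"] norms sharps
  by (auto simp: blk_def Mat_def)

lemma GG_Mat: "GG X i \<in> Mat (m i) (n i)"
  by (auto simp: blk_def Mat_def)

lemma inner_mkvec: "x \<bullet> mkvec B = (\<Sum>i<b. frob (m i) (n i) (blk e m n x i) (B i))"
proof -
  have "x \<bullet> mkvec B = (\<Sum>k\<in>UNIV. (\<lambda>t. x $ inv e t * (case t of (i, r, c) \<Rightarrow> B i r c)) (e k))"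
    unfolding inner_vec_def mkvec_def
    using e_bij by (auto simp: bij_betw_def intro!: sum.cong)
  also have "\<dots> = (\<Sum>t\<in>T. x $ inv e t * (case t of (i, r, c) \<Rightarrow> B i r c))"
    by (rule sum.reindex_bij_betw[OF e_bij])
  also have "T = Sigma {..<b} (\<lambda>i. Sigma {..<m i} (\<lambda>r. {..<n i}))" by auto
  also have "(\<Sum>t\<in>Sigma {..<b} (\<lambda>i. Sigma {..<m i} (\<lambda>r. {..<n i})). x $ inv e t * (case t of (i, r, c) \<Rightarrow> B i r c))
      = (\<Sum>i<b. \<Sum>rc\<in>Sigma {..<m i} (\<lambda>r. {..<n i}). x $ inv e (i, rc) * (case rc of (r, c) \<Rightarrow> B i r c))"
    by (subst sum.Sigma) (auto simp: case_prod_beta)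
  also have "\<dots> = (\<Sum>i<b. \<Sum>r<m i. \<Sum>c<n i. x $ inv e (i, r, c) * B i r c)"
    by (subst sum.Sigma) (auto simp: case_prod_beta)
  also have "\<dots> = (\<Sum>i<b. frob (m i) (n i) (blk e m n x i) (B i))"
    unfolding frob_def blk_def by simp
  finally show ?thesis .
qed

end

lemma alg1:
  fixes c d F N :: real
  assumes c0: "0 \<le> c" and h: "d\<^sup>2 \<le> 2 * (F - N\<^sup>2 / 2)"
  shows "- inverse c * F + c / 2 * (inverse c * N)\<^sup>2 \<le> - (inverse c * d\<^sup>2 / 2)"
proof (cases "c = 0")
  case True then show ?thesis by simp
next
  case False
  then have cp: "0 < c" using c0 by simp
  have "c / 2 * (inverse c * N)\<^sup>2 = inverse c * N\<^sup>2 / 2" using cp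
    by (simp add: power2_eq_square field_simps)
  moreover have "inverse c * d\<^sup>2 \<le> inverse c * (2 * (F - N\<^sup>2 / 2))"
    using h cp by (intro mult_left_mono) auto
  moreover have "inverse c * (2 * (F - N\<^sup>2 / 2)) = 2 * (inverse c * F) - inverse c * N\<^sup>2"
    by (simp add: algebra_simps)
  ultimately show ?thesis by (simp only: mult_minus_left)
qed

context bcd begin

lemma S_sub: "S \<in> set_pmf D \<Longrightarrow> S \<subseteq> {..<b}"
  using D_sets by auto

lemma cc_nonneg: assumes "S \<in> set_pmf D" "i \<in> S" shows "0 \<le> cc S X i"
proof -
  have ib: "i < b" using S_sub assms by auto
  then have "0 \<le> L0 i S" "0 \<le> L1 i S" using L_nonneg assms(1) by auto
  then show ?thesis using dd_nonneg[OF ib, of X] by simp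
qed

lemma step_eq:
  "stp S X = X + mkvec (\<lambda>i. if i \<in> S then (\<lambda>r c. - inverse (cc S X i) * sharp i (GG X i) r c) else (\<lambda>r c. 0))"
  unfolding bcd_step_def mkvec_def
  by (simp add: vec_eq_iff split: prod.splits)

lemma mkvec_supp: "fst (e k) \<notin> S \<Longrightarrow> mkvec (\<lambda>i. if i \<in> S then B i else (\<lambda>r c. 0)) $ k = 0"
  unfolding mkvec_def by (auto split: prod.splits)

lemma sharp_i:
  assumes "i < b"
  shows "0 \<le> dd X i" "(dd X i)\<^sup>2 \<le> 2 * (frob (m i) (n i) (GG X i) (sharp i (GG X i)) - (nrm i (sharp i (GG X i)))\<^sup>2 / 2)"
    "sharp i (GG X i) \<in> Mat (m i) (n i)"
  using sharp_facts[of "nrm i" "m i" "n i" "sharp i" "GG X i"] norms sharps assms GG_Mat by auto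

lemma descent:
  assumes S: "S \<in> set_pmf D"
  shows "f (stp S X) \<le> f X - phi S X"
proof -
  define B where "B = (\<lambda>i. if i \<in> S then (\<lambda>r c. - inverse (cc S X i) * sharp i (GG X i) r c) else (\<lambda>r c. (0::real)))"
  have sub: "S \<subseteq> {..<b}" by (rule S_sub[OF S])
  have sm: "f (X + mkvec B) - f X - grad X \<bullet> mkvec B
      \<le> (\<Sum>i\<in>S. cc S X i / 2 * (nrm i (blk e m n (mkvec B) i))\<^sup>2)"
    using smooth[rule_format, OF S mkvec_supp[where S=S and B="\<lambda>i r c. - inverse (cc S X i) * sharp i (GG X i) r c"], of X]
    unfolding B_def .
  have "grad X \<bullet> mkvec B = (\<Sum>i<b. frob (m i) (n i) (GG X i) (B i))" by (rule inner_mkvec)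
  also have "\<dots> = (\<Sum>i\<in>S. frob (m i) (n i) (GG X i) (B i))"
    using sub by (intro sum.mono_neutral_right) (auto simp: B_def frob_zero)
  also have "\<dots> = (\<Sum>i\<in>S. - inverse (cc S X i) * frob (m i) (n i) (GG X i) (sharp i (GG X i)))"
    by (intro sum.cong refl) (simp add: B_def frob_scale[of _ _ _ "- inverse (cc S X _)", simplified])
  finally have gi: "grad X \<bullet> mkvec B = \<dots>" .
  have nb: "nrm i (blk e m n (mkvec B) i) = inverse (cc S X i) * nrm i (sharp i (GG X i))" if "i \<in> S" for i
  proof -
    have ib: "i < b" using sub that by auto
    have mat: "B i \<in> Mat (m i) (n i)" using sharp_i(3)[OF ib, of X] that by (auto simp: B_def Mat_def)
    have "nrm i (blk e m n (mkvec B) i) = nrm i (\<lambda>r c. - inverse (cc S X i) * sharp i (GG X i) r c)"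
      using blk_mkvec[of i B, OF ib mat] that by (simp add: B_def)
    also have "\<dots> = \<bar>- inverse (cc S X i)\<bar> * nrm i (sharp i (GG X i))"
      using norms ib sharp_i(3)[OF ib, of X] unfolding is_mat_norm_def by blast
    also have "\<dots> = inverse (cc S X i) * nrm i (sharp i (GG X i))" using cc_nonneg[OF S that, of X] by simp
    finally show ?thesis .
  qed
  have tm: "- inverse (cc S X i) * frob (m i) (n i) (GG X i) (sharp i (GG X i))
        + cc S X i / 2 * (inverse (cc S X i) * nrm i (sharp i (GG X i)))\<^sup>2
      \<le> - (inverse (cc S X i) * (dd X i)\<^sup>2 / 2)" if "i \<in> S" for i
    using alg1[OF cc_nonneg[OF S that] sharp_i(2)[of i X]] sub that by auto
  have "f (stp S X) = f (X + mkvec B)" by (simp add: step_eq B_def)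
  also have "\<dots> \<le> f X + grad X \<bullet> mkvec B + (\<Sum>i\<in>S. cc S X i / 2 * (nrm i (blk e m n (mkvec B) i))\<^sup>2)"
    using sm by simp
  also have "\<dots> = f X + (\<Sum>i\<in>S. - inverse (cc S X i) * frob (m i) (n i) (GG X i) (sharp i (GG X i))
        + cc S X i / 2 * (inverse (cc S X i) * nrm i (sharp i (GG X i)))\<^sup>2)"
  proof -
    have "(\<Sum>i\<in>S. cc S X i / 2 * (nrm i (blk e m n (mkvec B) i))\<^sup>2)
        = (\<Sum>i\<in>S. cc S X i / 2 * (inverse (cc S X i) * nrm i (sharp i (GG X i)))\<^sup>2)"
      by (rule sum.cong) (simp_all add: nb)
    then show ?thesis by (simp only: gi sum.distrib add.assoc)
  qed
  also have "\<dots> \<le> f X + (\<Sum>i\<in>S. - (inverse (cc S X i) * (dd X i)\<^sup>2 / 2))"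
    using tm by (intro add_left_mono sum_mono) auto
  also have "\<dots> = f X - phi S X" by (simp add: sum_negf)
  finally show ?thesis .
qed

end

lemma alg2:
  fixes c d l :: real
  assumes "0 \<le> c" "0 < d \<Longrightarrow> 0 < c" "0 \<le> d"
  shows "2 * l * d - l\<^sup>2 * c \<le> inverse c * d\<^sup>2"
proof (cases "d = 0")
  case True then show ?thesis using assms by simp
next
  case False
  then have cp: "0 < c" using assms by simp
  have "0 \<le> (d - l * c)\<^sup>2 / c" using cp by simp
  also have "(d - l * c)\<^sup>2 / c = inverse c * d\<^sup>2 - (2 * l * d - l\<^sup>2 * c)"
    using cp by (simp add: field_simps power2_eq_square)
  finally show ?thesis by simp
qed

lemma alg3:
  fixes p c0 c1 d mu :: real
  assumes "0 < c1"
  shows "2 * (mu / c1) * d * p - (mu / c1)\<^sup>2 * (p * c0) - (mu / c1)\<^sup>2 * d * (p * c1)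
       = (2 * mu - mu\<^sup>2) * (p / c1 * d) - mu\<^sup>2 * (p * c0 / c1\<^sup>2)"
  using assms by (simp add: field_simps power2_eq_square)

lemma alg4:
  fixes d F N :: real
  assumes "0 < d" "d\<^sup>2 \<le> 2 * (F - N\<^sup>2 / 2)"
  shows "0 < F"
proof -
  have "0 < d\<^sup>2" using assms(1) by simp
  moreover have "0 \<le> N\<^sup>2" by simp
  moreover have "d\<^sup>2 \<le> 2 * F - N\<^sup>2" using assms(2) by (simp add: algebra_simps)
  ultimately show ?thesis by linarith
qed

context bcd begin

lemma cc_pos:
  assumes S: "S \<in> set_pmf D" and iS: "i \<in> S" and dpos: "0 < dd X i"
  shows "0 < cc S X i"
proof (rule ccontr)
  assume "\<not> 0 < cc S X i"
  then have c0: "cc S X i = 0" using cc_nonneg[OF S iS, of X] by simp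
  have sub: "S \<subseteq> {..<b}" by (rule S_sub[OF S])
  have ib: "i < b" using sub iS by auto
  define s where "s = sharp i (GG X i)"
  define F where "F = frob (m i) (n i) (GG X i) s"
  have Fp: "0 < F" unfolding F_def s_def by (rule alg4[OF dpos sharp_i(2)[OF ib]])
  define t where "t = (f X - fstar + 1) / F"
  define B' where "B' = (\<lambda>j. if j = i then (\<lambda>r c. - t * s r c) else (\<lambda>r c. (0::real)))"
  define B where "B = (\<lambda>j. if j \<in> S then B' j else (\<lambda>r c. (0::real)))"
  have sm: "f (X + mkvec B) - f X - grad X \<bullet> mkvec B
      \<le> (\<Sum>j\<in>S. cc S X j / 2 * (nrm j (blk e m n (mkvec B) j))\<^sup>2)"
    using smooth[rule_format, OF S mkvec_supp[where S=S and B=B'], of X]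
    unfolding B_def .
  have z: "(\<lambda>r c. 0::real) \<in> Mat (m j) (n j)" for j by (simp add: Mat_def)
  have "(\<Sum>j\<in>S. cc S X j / 2 * (nrm j (blk e m n (mkvec B) j))\<^sup>2) = 0"
  proof (rule sum.neutral, rule ballI)
    fix j assume jS: "j \<in> S"
    show "cc S X j / 2 * (nrm j (blk e m n (mkvec B) j))\<^sup>2 = 0"
    proof (cases "j = i")
      case True then show ?thesis using c0 by simp
    next
      case False
      have jb: "j < b" using sub jS by auto
      have "B j = (\<lambda>r c. 0)" using False jS by (simp add: B_def B'_def)
      then have "blk e m n (mkvec B) j = (\<lambda>r c. 0)" using blk_mkvec[of j B, OF jb] z by simp
      then show ?thesis using norm_zero[of "nrm j" "m j" "n j"] norms jb by simp
    qed
  qed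
  moreover have "grad X \<bullet> mkvec B = - t * F"
  proof -
    have "grad X \<bullet> mkvec B = (\<Sum>j<b. frob (m j) (n j) (GG X j) (B j))" by (rule inner_mkvec)
    also have "\<dots> = frob (m i) (n i) (GG X i) (B i) + (\<Sum>j\<in>{..<b}-{i}. frob (m j) (n j) (GG X j) (B j))"
      using ib by (simp add: sum.remove)
    also have "(\<Sum>j\<in>{..<b}-{i}. frob (m j) (n j) (GG X j) (B j)) = 0"
      by (rule sum.neutral) (auto simp: B_def B'_def frob_zero)
    also have "frob (m i) (n i) (GG X i) (B i) + 0 = frob (m i) (n i) (GG X i) (B i)" by simp
    also have "\<dots> = - t * F"
    proof -
      have Bi: "B i = (\<lambda>r c. - t * s r c)" using iS by (simp add: B_def B'_def)
      have "frob (m i) (n i) (GG X i) (B i) = - t * F" unfolding Bi F_def by (rule frob_scale)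
      then show ?thesis by simp
    qed
    finally show ?thesis .
  qed
  ultimately have "f (X + mkvec B) \<le> f X - t * F" using sm by simp
  also have "t * F = f X - fstar + 1" using Fp by (simp add: t_def)
  finally have "f (X + mkvec B) < fstar" by simp
  with lower show False by (meson not_le)
qed

end

context bcd begin

lemma two_phi:
  assumes S: "S \<in> set_pmf D"
  shows "(\<Sum>i<b. if i \<in> S then 2 * lam i * dd X i - (lam i)\<^sup>2 * (L0 i S + L1 i S * dd X i) else 0)
         \<le> 2 * phi S X"
proof -
  have sub: "S \<subseteq> {..<b}" by (rule S_sub[OF S])
  have "(\<Sum>i<b. if i \<in> S then 2 * lam i * dd X i - (lam i)\<^sup>2 * (L0 i S + L1 i S * dd X i) else 0)
      = (\<Sum>i\<in>S. 2 * lam i * dd X i - (lam i)\<^sup>2 * cc S X i)"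
    using sub by (simp add: sum.inter_restrict[symmetric] Int_absorb1)
  also have "\<dots> \<le> (\<Sum>i\<in>S. inverse (cc S X i) * (dd X i)\<^sup>2)"
  proof (rule sum_mono)
    fix i assume iS: "i \<in> S"
    have ib: "i < b" using sub iS by auto
    show "2 * lam i * dd X i - (lam i)\<^sup>2 * cc S X i \<le> inverse (cc S X i) * (dd X i)\<^sup>2"
      by (rule alg2[OF cc_nonneg[OF S iS] cc_pos[OF S iS] dd_nonneg[OF ib]])
  qed
  also have "\<dots> = 2 * phi S X" by (simp add: sum_distrib_left)
  finally show ?thesis .
qed

lemma per_i:
  assumes ppos: "0 < pin D i" and cpos: "0 < cexp D (L1 i) i"
  shows "(\<Sum>S\<in>set_pmf D. pmf D S * (if i \<in> S then 2 * (mu / cexp D (L1 i) i) * d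
            - (mu / cexp D (L1 i) i)\<^sup>2 * (L0 i S + L1 i S * d) else 0))
       = (2 * mu - mu\<^sup>2) * (pin D i / cexp D (L1 i) i * d)
         - mu\<^sup>2 * (pin D i * cexp D (L0 i) i / (cexp D (L1 i) i)\<^sup>2)"
proof -
  define l where "l = mu / cexp D (L1 i) i"
  have "(\<Sum>S\<in>set_pmf D. pmf D S * (if i \<in> S then 2 * l * d - l\<^sup>2 * (L0 i S + L1 i S * d) else 0))
     = (\<Sum>S\<in>set_pmf D. 2 * l * d * (pmf D S * (if i \<in> S then 1 else 0))
          - l\<^sup>2 * (pmf D S * (if i \<in> S then L0 i S else 0))
          - l\<^sup>2 * d * (pmf D S * (if i \<in> S then L1 i S else 0)))"
    by (rule sum.cong) (auto simp: algebra_simps)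
  also have "\<dots> = 2 * l * d * (\<Sum>S\<in>set_pmf D. pmf D S * (if i \<in> S then 1 else 0))
          - l\<^sup>2 * (\<Sum>S\<in>set_pmf D. pmf D S * (if i \<in> S then L0 i S else 0))
          - l\<^sup>2 * d * (\<Sum>S\<in>set_pmf D. pmf D S * (if i \<in> S then L1 i S else 0))"
    by (simp add: sum_subtractf sum_distrib_left)
  also have "\<dots> = 2 * l * d * pin D i - l\<^sup>2 * (pin D i * cexp D (L0 i) i) - l\<^sup>2 * d * (pin D i * cexp D (L1 i) i)"
    using pin_sum[OF fin_D, of i] cexp_sum[OF fin_D ppos, of "L0 i"] cexp_sum[OF fin_D ppos, of "L1 i"]
    by simp
  also have "\<dots> = (2 * mu - mu\<^sup>2) * (pin D i / cexp D (L1 i) i * d)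
         - mu\<^sup>2 * (pin D i * cexp D (L0 i) i / (cexp D (L1 i) i)\<^sup>2)"
    unfolding l_def by (rule alg3[OF cpos])
  finally show ?thesis unfolding l_def .
qed

lemma psi_bound:
  assumes ppos: "\<forall>i<b. 0 < pin D i" and cpos: "\<forall>i<b. 0 < cexp D (L1 i) i"
  shows "(2 * mu - mu\<^sup>2) * (\<Sum>i<b. pin D i / cexp D (L1 i) i * dd X i)
         - mu\<^sup>2 * (\<Sum>i<b. pin D i * cexp D (L0 i) i / (cexp D (L1 i) i)\<^sup>2)
       \<le> 2 * (\<Sum>S\<in>set_pmf D. pmf D S * phi S X)"
proof -
  define lam where "lam i = mu / cexp D (L1 i) i" for i
  have "(2 * mu - mu\<^sup>2) * (\<Sum>i<b. pin D i / cexp D (L1 i) i * dd X i)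
         - mu\<^sup>2 * (\<Sum>i<b. pin D i * cexp D (L0 i) i / (cexp D (L1 i) i)\<^sup>2)
      = (\<Sum>i<b. (2 * mu - mu\<^sup>2) * (pin D i / cexp D (L1 i) i * dd X i)
         - mu\<^sup>2 * (pin D i * cexp D (L0 i) i / (cexp D (L1 i) i)\<^sup>2))"
    by (simp add: sum_subtractf sum_distrib_left)
  also have "\<dots> = (\<Sum>i<b. \<Sum>S\<in>set_pmf D. pmf D S * (if i \<in> S then 2 * lam i * dd X i
            - (lam i)\<^sup>2 * (L0 i S + L1 i S * dd X i) else 0))"
  proof (rule sum.cong[OF refl])
    fix i assume "i \<in> {..<b}"
    then have "0 < pin D i" "0 < cexp D (L1 i) i" using ppos cpos by auto
    from per_i[OF this, of mu "dd X i"] show "(2 * mu - mu\<^sup>2) * (pin D i / cexp D (L1 i) i * dd X i)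
         - mu\<^sup>2 * (pin D i * cexp D (L0 i) i / (cexp D (L1 i) i)\<^sup>2) = (\<Sum>S\<in>set_pmf D. pmf D S * (if i \<in> S then 2 * lam i * dd X i
            - (lam i)\<^sup>2 * (L0 i S + L1 i S * dd X i) else 0))"
      unfolding lam_def by simp
  qed
  also have "\<dots> = (\<Sum>S\<in>set_pmf D. pmf D S * (\<Sum>i<b. if i \<in> S then 2 * lam i * dd X i
            - (lam i)\<^sup>2 * (L0 i S + L1 i S * dd X i) else 0))"
    by (simp add: sum_distrib_left) (rule sum.swap)
  also have "\<dots> \<le> (\<Sum>S\<in>set_pmf D. pmf D S * (2 * phi S X))"
    by (rule sum_mono, rule mult_left_mono) (auto intro: two_phi)
  also have "\<dots> = 2 * (\<Sum>S\<in>set_pmf D. pmf D S * phi S X)"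
    by (simp add: sum_distrib_left algebra_simps)
  finally show ?thesis .
qed

end

lemma Ev_scale: "Ev D stp k (\<lambda>X. a * h X) X = a * Ev D stp k h X"
  by (induction k arbitrary: X) (auto simp: sum_distrib_left algebra_simps)

lemma bcd_iter_giter:
  "bcd_iter e m n nrm sharp grad L0 L1 X0 \<omega> k = giter (bcd_step e m n nrm sharp grad L0 L1) X0 \<omega> k"
  by (induction k) auto

lemma alg_final:
  fixes a :: "nat \<Rightarrow> real" and C t \<delta> :: real and K :: nat
  assumes C0: "0 \<le> C" and t0: "0 < t" and K0: "0 < K"
    and Kb: "2 * \<delta> * (C + t) / t\<^sup>2 \<le> real K"
    and sumb: "\<And>mu. (\<Sum>j<K. ((2 * mu - mu\<^sup>2) * a j - mu\<^sup>2 * C) / 2) \<le> \<delta>"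
  shows "\<exists>j<K. a j \<le> t"
proof (rule ccontr)
  assume "\<not> (\<exists>j<K. a j \<le> t)"
  then have gt: "\<And>j. j < K \<Longrightarrow> t < a j" by auto
  define mu where "mu = t / (C + t)"
  have Ct: "0 < C + t" using C0 t0 by simp
  have mu0: "0 < mu" using t0 Ct by (simp add: mu_def)
  have mu1: "mu \<le> 1" using C0 Ct by (simp add: mu_def)
  have kap: "0 < 2 * mu - mu\<^sup>2"
  proof -
    have "2 * mu - mu\<^sup>2 = mu * (2 - mu)" by (simp add: power2_eq_square algebra_simps)
    then show ?thesis using mu0 mu1 by simp
  qed
  have val: "(2 * mu - mu\<^sup>2) * t - mu\<^sup>2 * C = t\<^sup>2 / (C + t)"
  proof -
    have e1: "mu * (C + t) = t" using Ct by (simp add: mu_def)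
    have "(2 * mu - mu\<^sup>2) * t - mu\<^sup>2 * C = 2 * mu * t - mu * (mu * (C + t))"
      by (simp add: power2_eq_square algebra_simps)
    also have "\<dots> = mu * t" using e1 by simp
    also have "\<dots> = t\<^sup>2 / (C + t)" by (simp add: mu_def power2_eq_square)
    finally show ?thesis .
  qed
  have "(\<Sum>j<K. ((2 * mu - mu\<^sup>2) * t - mu\<^sup>2 * C) / 2) < (\<Sum>j<K. ((2 * mu - mu\<^sup>2) * a j - mu\<^sup>2 * C) / 2)"
    using K0 gt kap by (intro sum_strict_mono) auto
  also have "\<dots> \<le> \<delta>" by (rule sumb)
  finally have "real K * (t\<^sup>2 / (C + t)) / 2 < \<delta>" by (simp add: val)
  moreover have "2 * \<delta> * (C + t) \<le> real K * t\<^sup>2" using Kb t0 by (simp add: pos_divide_le_eq)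
  ultimately show False using Ct t0
    by (simp add: field_simps)
qed

theorem theorem6:
  fixes b :: nat and m n :: "nat \<Rightarrow> nat"
    and e :: "'k::finite \<Rightarrow> nat \<times> nat \<times> nat"
    and nrm :: "nat \<Rightarrow> (nat \<Rightarrow> nat \<Rightarrow> real) \<Rightarrow> real"
    and sharp :: "nat \<Rightarrow> (nat \<Rightarrow> nat \<Rightarrow> real) \<Rightarrow> (nat \<Rightarrow> nat \<Rightarrow> real)"
    and f :: "real^'k \<Rightarrow> real" and grad :: "real^'k \<Rightarrow> real^'k" and fstar :: real
    and D :: "nat set pmf" and L0 L1 :: "nat \<Rightarrow> nat set \<Rightarrow> real"
    and X0 :: "real^'k" and \<epsilon> :: real and K :: nat
  assumes e_bij: "bij_betw e UNIV {(i, r, c). i < b \<and> r < m i \<and> c < n i}"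
    and norms: "\<forall>i<b. is_mat_norm (nrm i) (m i) (n i)"
    and sharps: "\<forall>i<b. is_sharp (nrm i) (m i) (n i) (sharp i)"
    and grad: "\<forall>X. (f has_derivative (\<lambda>H. grad X \<bullet> H)) (at X)"
    and grad_cont: "continuous_on UNIV grad"
    and lower: "\<forall>X. fstar \<le> f X"
    and D_sets: "set_pmf D \<subseteq> Pow {..<b}"
    and L_nonneg: "\<forall>S\<in>set_pmf D. \<forall>i<b. 0 \<le> L0 i S \<and> 0 \<le> L1 i S"
    and smooth: "\<forall>S\<in>set_pmf D. \<forall>X \<Gamma>. (\<forall>k. fst (e k) \<notin> S \<longrightarrow> \<Gamma> $ k = 0) \<longrightarrow>
        f (X + \<Gamma>) - f X - grad X \<bullet> \<Gamma>
          \<le> (\<Sum>i\<in>S. (L0 i S + L1 i S * dual_norm (nrm i) (m i) (n i) (blk e m n (grad X) i)) / 2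
                     * (nrm i (blk e m n \<Gamma> i))\<^sup>2)"
    and pin_pos: "\<forall>i<b. 0 < pin D i"
    and cexp_pos: "\<forall>i<b. 0 < cexp D (L1 i) i"
    and eps: "0 < \<epsilon>"
    and K_pos: "0 < K"
    and K_bound: "\<lceil>2 * (f X0 - fstar) * (\<Sum>i<b. pin D i * cexp D (L0 i) i / (cexp D (L1 i) i)\<^sup>2)
                   / (\<epsilon>\<^sup>2 * ((1 / real b) * (\<Sum>l<b. pin D l / cexp D (L1 l) l))\<^sup>2)
                 + 2 * (f X0 - fstar) / (\<epsilon> * ((1 / real b) * (\<Sum>l<b. pin D l / cexp D (L1 l) l)))\<rceil>
                 \<le> int K"
  shows "Min ((\<lambda>k. \<Sum>i<b. (pin D i / cexp D (L1 i) i)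
                   / ((1 / real b) * (\<Sum>l<b. pin D l / cexp D (L1 l) l))
              * (\<integral>\<omega>. dual_norm (nrm i) (m i) (n i)
                     (blk e m n (grad (bcd_iter e m n nrm sharp grad L0 L1 X0 \<omega> k)) i)
                  \<partial>stream_space (measure_pmf D))) ` {..<K})
         \<le> \<epsilon>"
proof -
  interpret bcd b m n e nrm sharp f grad fstar D L0 L1
    using e_bij norms sharps lower D_sets L_nonneg smooth by unfold_locales
  define w where "w i = pin D i / cexp D (L1 i) i" for i
  define W where "W = (1 / real b) * (\<Sum>l<b. pin D l / cexp D (L1 l) l)"
  define C where "C = (\<Sum>i<b. pin D i * cexp D (L0 i) i / (cexp D (L1 i) i)\<^sup>2)"
  define \<delta> where "\<delta> = f X0 - fstar"
  define s where "s X = (\<Sum>i<b. w i * dd X i)" for X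
  define a where "a j = Ev D stp j s X0" for j
  define trm where "trm k = (\<Sum>i<b. (pin D i / cexp D (L1 i) i)
                   / ((1 / real b) * (\<Sum>l<b. pin D l / cexp D (L1 l) l))
              * (\<integral>\<omega>. dual_norm (nrm i) (m i) (n i)
                     (blk e m n (grad (bcd_iter e m n nrm sharp grad L0 L1 X0 \<omega> k)) i)
                  \<partial>stream_space (measure_pmf D)))" for k
  have fin: "finite ((\<lambda>k. trm k) ` {..<K})" by simp
  show ?thesis
  proof (cases "b = 0")
    case True
    have "trm 0 = 0" by (simp add: trm_def True)
    moreover have "Min ((\<lambda>k. trm k) ` {..<K}) \<le> trm 0"
      using K_pos by (intro Min_le fin) auto
    ultimately show ?thesis using eps unfolding trm_def by simp
  next
    case False
    have w0: "0 < w i" if "i < b" for i using pin_pos cexp_pos that by (simp add: w_def)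
    have W0: "0 < W" unfolding W_def using False w0 unfolding w_def
      by (intro mult_pos_pos sum_pos) auto
    have c0nn: "0 \<le> cexp D (L0 i) i" if ib: "i < b" for i
    proof -
      have pp: "0 < pin D i" using pin_pos ib by simp
      have "0 \<le> pin D i * cexp D (L0 i) i" unfolding cexp_sum[OF fin_D pp]
        using L_nonneg ib by (intro sum_nonneg) auto
      then show ?thesis using pp by (simp add: zero_le_mult_iff)
    qed
    have C0: "0 \<le> C" unfolding C_def using pin_pos cexp_pos c0nn
      by (intro sum_nonneg divide_nonneg_pos mult_nonneg_nonneg) auto
    define t where "t = \<epsilon> * W"
    have t0: "0 < t" using eps W0 by (simp add: t_def)
    have Kb: "2 * \<delta> * (C + t) / t\<^sup>2 \<le> real K"
    proof -
      have "2 * \<delta> * (C + t) / t\<^sup>2 = 2 * (f X0 - fstar) * C / (\<epsilon>\<^sup>2 * W\<^sup>2) + 2 * (f X0 - fstar) / (\<epsilon> * W)"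
        using t0 eps W0 by (simp add: t_def \<delta>_def field_simps power2_eq_square)
      also have "\<dots> \<le> real K"
        using K_bound unfolding C_def W_def ceiling_le_iff by simp
      finally show ?thesis .
    qed
    have sumb: "(\<Sum>j<K. ((2 * mu - mu\<^sup>2) * a j - mu\<^sup>2 * C) / 2) \<le> \<delta>" for mu
    proof -
      have "(\<Sum>j<K. ((2 * mu - mu\<^sup>2) * a j - mu\<^sup>2 * C) / 2)
          \<le> (\<Sum>j<K. Ev D stp j (\<lambda>X. \<Sum>S\<in>set_pmf D. pmf D S * phi S X) X0)"
      proof (rule sum_mono)
        fix j
        have "((2 * mu - mu\<^sup>2) * a j - mu\<^sup>2 * C) / 2
            = Ev D stp j (\<lambda>X. ((2 * mu - mu\<^sup>2) / 2) * s X + (- (mu\<^sup>2 * C) / 2) * 1) X0"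
          unfolding Ev_lin Ev_const[OF fin_D] a_def by (simp add: field_simps)
        also have "\<dots> \<le> Ev D stp j (\<lambda>X. \<Sum>S\<in>set_pmf D. pmf D S * phi S X) X0"
        proof (rule Ev_mono)
          fix X
          have "(2 * mu - mu\<^sup>2) * s X - mu\<^sup>2 * C \<le> 2 * (\<Sum>S\<in>set_pmf D. pmf D S * phi S X)"
            using psi_bound[OF pin_pos cexp_pos, of mu X] unfolding s_def w_def C_def .
          then show "(2 * mu - mu\<^sup>2) / 2 * s X + - (mu\<^sup>2 * C) / 2 * 1 \<le> (\<Sum>S\<in>set_pmf D. pmf D S * phi S X)"
            by simp
        qed
        finally show "((2 * mu - mu\<^sup>2) * a j - mu\<^sup>2 * C) / 2 \<le> Ev D stp j (\<lambda>X. \<Sum>S\<in>set_pmf D. pmf D S * phi S X) X0" .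
      qed
      also have "\<dots> \<le> f X0 - fstar"
        by (rule Ev_descent[where F=f and stp=stp and \<phi>="\<lambda>S X. phi S X" and fstar=fstar and D=D,
              OF fin_D descent lower[rule_format]])
      finally show ?thesis unfolding \<delta>_def .
    qed
    obtain j where j: "j < K" "a j \<le> t" using alg_final[OF C0 t0 K_pos Kb sumb] by blast
    have "Min ((\<lambda>k. trm k) ` {..<K}) \<le> trm j" using j(1) by (intro Min_le fin) auto
    also have "trm j \<le> (\<Sum>i<b. w i / W * Ev D stp j (\<lambda>X. dd X i) X0)"
      unfolding trm_def
    proof (rule sum_mono)
      fix i assume "i \<in> {..<b}"
      then have ib: "i < b" by simp
      have I: "(\<integral>\<omega>. dd (bcd_iter e m n nrm sharp grad L0 L1 X0 \<omega> j) i \<partial>stream_space (measure_pmf D))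
          \<le> Ev D stp j (\<lambda>X. dd X i) X0"
        unfolding bcd_iter_giter by (rule Ev_stream[OF fin_D dd_nonneg[OF ib]])
      have "w i / W * (\<integral>\<omega>. dd (bcd_iter e m n nrm sharp grad L0 L1 X0 \<omega> j) i \<partial>stream_space (measure_pmf D))
          \<le> w i / W * Ev D stp j (\<lambda>X. dd X i) X0"
        using w0[OF ib] W0 I by (intro mult_left_mono) auto
      then show "pin D i / cexp D (L1 i) i / ((1 / real b) * (\<Sum>l<b. pin D l / cexp D (L1 l) l))
          * (\<integral>\<omega>. dd (bcd_iter e m n nrm sharp grad L0 L1 X0 \<omega> j) i \<partial>stream_space (measure_pmf D))
          \<le> w i / W * Ev D stp j (\<lambda>X. dd X i) X0"
        unfolding w_def W_def .
    qed
    also have "\<dots> = a j / W"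
      unfolding a_def s_def by (simp add: Ev_sum Ev_scale sum_divide_distrib)
    also have "\<dots> \<le> t / W" using j(2) W0 by (simp add: divide_right_mono)
    also have "\<dots> = \<epsilon>" using W0 by (simp add: t_def)
    finally show ?thesis unfolding trm_def .
  qed
qed

end
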